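(* Let $\Gamma=(H,\iota,\sigma,m)$ be a Brauer graph, $H'\subseteq H$ stable under $\iota$, and $(h_1,r_1)$, $(h_2,r_2)$ two distinct maximal sectors of elements of $H'$ in $\Gamma$. For any admissible grading $d:H\to\mathbb{Z}/\overline m\mathbb{Z}$ of $\Gamma$, $$\mu^+_{(h_1,r_1)}\big(\mu^+_{(h_2,r_2)}(\Gamma,d)\big)=\mu^+_{(h_2,r_2)}\big(\mu^+_{(h_1,r_1)}(\Gamma,d)\big).$$
   Context: A Brauer graph $\Gamma=(H,\iota,\sigma,m)$: $H$ finite set, $\iota$ fixed-point-free involution, $\sigma$ a permutation, $m:H\to\mathbb{Z}_{>0}$ constant on $\sigma$-orbits; $\overline m=\mathrm{lcm}\{m(h)\}$. A grading $d:H\to\mathbb{Z}/\overline m\mathbb{Z}$ is admissible if for each $\sigma$-orbit $v$, $\sum_{h\in v}d(h)=\overline m/\widetilde m(v)$, $\widetilde m(v)$ being the value of $m$ on $v$; $(\Gamma,d)$ is then a $\mathbb{Z}/\overline m\mathbb{Z}$-graded Brauer graph. A sector of elements of $H'$ is a pair $(h,r)\in H\times\mathbb{Z}_{\ge0}$ with $r+1$ the least $r'\ge0$ such that $\sigma^{r'}h\notin H'$; it is maximal if moreover $\sigma^{-1}h\notin H'$. The graded generalized Kauer move of a sector is $\mu^+_{(h,r)}(\Gamma,d)=(H,\iota,\sigma_{(h,r)},m_{(h,r)},d_{(h,r)})$ with $\sigma_{(h,r)}=(h\ \ \sigma^{r+1}h)\circ\sigma\circ(\sigma^rh\ \ \iota\sigma^{r+1}h)$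 (permutations applied right to left), $m_{(h,r)}(\sigma^ih)=m(\iota\sigma^{r+1}h)$ for $0\le i\le r$ and $m_{(h,r)}=m$ elsewhere, and $d_{(h,r)}$ given by: $d_{(h,r)}(\iota\sigma^{r+1}h)=-\sum_{i=0}^rd(\sigma^ih)$; $d_{(h,r)}(\sigma^rh)=d(\iota\sigma^{r+1}h)+d(\sigma^rh)$ if $\iota\sigma^{r+1}h\ne\sigma^{-1}h$ and $=\sum_{i=-1}^rd(\sigma^ih)+d(\sigma^rh)$ otherwise; $d_{(h,r)}(\sigma^{-1}h)=\sum_{i=-1}^rd(\sigma^ih)$ if $\iota\sigma^{r+1}h\neq\sigma^{-1}h$ and $=-\sum_{i=0}^rd(\sigma^ih)$ otherwise; $d_{(h,r)}(h')=d(h')$ for all other $h'$. The result is again a graded Brauer graph, and a maximal sector of $\Gamma$ distinct from $(h,r)$ remains a sector of the moved graph, so the iterated moves in the claim are defined. *)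

theory Defs
  imports "HOL-Combinatorics.Permutations" "HOL-Number_Theory.Cong"
begin

text \<open>A Brauer graph (H, iota, sigma, m). The permutations iota and sigma are total
functions on the ambient type that permute H (identity outside H); m is only
relevant on H.\<close>

definition brauer_graph ::
  "'a set \<Rightarrow> ('a \<Rightarrow> 'a) \<Rightarrow> ('a \<Rightarrow> 'a) \<Rightarrow> ('a \<Rightarrow> nat) \<Rightarrow> bool" where
  "brauer_graph H \<iota> \<sigma> m \<longleftrightarrow>
     finite H \<and> \<iota> permutes H \<and> (\<forall>h\<in>H. \<iota> h \<noteq> h \<and> \<iota> (\<iota> h) = h) \<and>
     \<sigma> permutes H \<and> (\<forall>h\<in>H. 0 < m h) \<and> (\<forall>h\<in>H. m (\<sigma> h) = m h)"

definition mbar :: "'a set \<Rightarrow> ('a \<Rightarrow> nat) \<Rightarrow> nat" where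
  "mbar H m = Lcm (m ` H)"

definition sigma_orbit :: "('a \<Rightarrow> 'a) \<Rightarrow> 'a \<Rightarrow> 'a set" where
  "sigma_orbit \<sigma> h = {(\<sigma> ^^ k) h | k. True}"

text \<open>Gradings take values in Z/mbar Z, represented by integers; all equalities of
grades are read modulo mbar.\<close>
definition admissible_grading ::
  "'a set \<Rightarrow> ('a \<Rightarrow> 'a) \<Rightarrow> ('a \<Rightarrow> nat) \<Rightarrow> ('a \<Rightarrow> int) \<Rightarrow> bool" where
  "admissible_grading H \<sigma> m d \<longleftrightarrow>
     (\<forall>h\<in>H. [(\<Sum>x\<in>sigma_orbit \<sigma> h. d x) = int (mbar H m div m h)] (mod int (mbar H m)))"

definition sector :: "'a set \<Rightarrow> ('a \<Rightarrow> 'a) \<Rightarrow> 'a \<times> nat \<Rightarrow> bool" where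
  "sector H' \<sigma> hr \<longleftrightarrow> (case hr of (h, r) \<Rightarrow>
     (\<forall>i\<le>r. (\<sigma> ^^ i) h \<in> H') \<and> (\<sigma> ^^ Suc r) h \<notin> H')"

definition maximal_sector :: "'a set \<Rightarrow> ('a \<Rightarrow> 'a) \<Rightarrow> 'a \<times> nat \<Rightarrow> bool" where
  "maximal_sector H' \<sigma> hr \<longleftrightarrow> sector H' \<sigma> hr \<and> inv \<sigma> (fst hr) \<notin> H'"

definition kauer_move ::
  "('a \<Rightarrow> 'a) \<Rightarrow> ('a \<Rightarrow> 'a) \<times> ('a \<Rightarrow> nat) \<times> ('a \<Rightarrow> int) \<Rightarrow> 'a \<times> nat
     \<Rightarrow> ('a \<Rightarrow> 'a) \<times> ('a \<Rightarrow> nat) \<times> ('a \<Rightarrow> int)" where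
  "kauer_move \<iota> G hr = (case G of (\<sigma>, m, d) \<Rightarrow> case hr of (h, r) \<Rightarrow>
     let a = \<iota> ((\<sigma> ^^ Suc r) h);
         b = (\<sigma> ^^ r) h;
         c = inv \<sigma> h;
         S = (\<Sum>i\<le>r. d ((\<sigma> ^^ i) h));
         \<sigma>' = transpose h ((\<sigma> ^^ Suc r) h) \<circ> \<sigma> \<circ> transpose b a;
         m' = (\<lambda>x. if \<exists>i\<le>r. x = (\<sigma> ^^ i) h then m a else m x);
         d' = (\<lambda>x. if x = a then - S
                   else if x = b then (if a \<noteq> c then d a + d b else d c + S + d b)
                   else if x = c then (if a \<noteq> c then d c + S else - S)
                   else d x)
     in (\<sigma>', m', d'))"

end

theory Submission
  imports Defs
begin

lemma move_explicit:
  assumes "(\<sigma> ^^ Suc r) h = e" "(\<sigma> ^^ r) h = b" "inv \<sigma> h = c"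
    "(\<Sum>i\<le>r. d ((\<sigma> ^^ i) h)) = S" "\<And>x. (\<exists>i\<le>r. x = (\<sigma>^^i) h) \<longleftrightarrow> x \<in> B"
  shows "kauer_move \<iota> (\<sigma>,m,d) (h,r) = (Transposition.transpose h e \<circ> \<sigma> \<circ> Transposition.transpose b (\<iota> e),
     (\<lambda>x. if x\<in>B then m (\<iota> e) else m x),
     (\<lambda>x. if x = \<iota> e then -S else if x = b then (if \<iota> e \<noteq> c then d (\<iota> e) + d b else d c + S + d b)
          else if x = c then (if \<iota> e \<noteq> c then d c + S else -S) else d x))"
  using assms unfolding kauer_move_def Let_def by (simp add: fun_eq_iff)

lemma sector_facts:
  assumes bg: "brauer_graph H \<iota> \<sigma> m" and sub: "H' \<subseteq> H" and st: "\<iota> ` H' \<subseteq> H'"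
    and ms: "maximal_sector H' \<sigma> (h, r)"
  shows "\<And>i. i \<le> r \<Longrightarrow> (\<sigma>^^i) h \<in> H'" "(\<sigma>^^Suc r) h \<notin> H'" "(\<sigma>^^Suc r) h \<in> H"
    "\<iota> ((\<sigma>^^Suc r) h) \<notin> H'" "inv \<sigma> h \<notin> H'" "\<sigma> (inv \<sigma> h) = h"
    "\<iota> ((\<sigma>^^Suc r) h) \<noteq> (\<sigma>^^Suc r) h"
proof -
  have p: "\<sigma> permutes H" and pi: "\<iota> permutes H" and inv: "\<forall>h\<in>H. \<iota> h \<noteq> h \<and> \<iota> (\<iota> h) = h"
    using bg unfolding brauer_graph_def by auto
  show A: "\<And>i. i \<le> r \<Longrightarrow> (\<sigma>^^i) h \<in> H'" and B: "(\<sigma>^^Suc r) h \<notin> H'" "inv \<sigma> h \<notin> H'"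
    using ms unfolding maximal_sector_def sector_def by auto
  have "h \<in> H" using A[of 0] sub by auto
  have "\<And>n. (\<sigma>^^n) h \<in> H"
  proof -
    fix n show "(\<sigma>^^n) h \<in> H"
      by (induction n) (auto simp: \<open>h \<in> H\<close> permutes_in_image[OF p])
  qed
  then show C: "(\<sigma>^^Suc r) h \<in> H" by blast
  show "\<iota> ((\<sigma>^^Suc r) h) \<notin> H'"
  proof
    assume "\<iota> ((\<sigma>^^Suc r) h) \<in> H'"
    then have "\<iota> (\<iota> ((\<sigma>^^Suc r) h)) \<in> H'" using st by auto
    then show False using inv C B by auto
  qed
  show "\<sigma> (inv \<sigma> h) = h" using permutes_inverses(1)[OF p] by auto
  show "\<iota> ((\<sigma>^^Suc r) h) \<noteq> (\<sigma>^^Suc r) h" using inv C by blast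
qed


lemma disj_aux:
  assumes p: "\<sigma> permutes H"
    and m1: "maximal_sector H' \<sigma> (h1, r1)" and m2: "maximal_sector H' \<sigma> (h2, r2)"
    and ne: "(h1, r1) \<noteq> (h2, r2)" and ij: "i \<le> j" and i1: "i \<le> r1" and j2: "j \<le> r2"
  shows "(\<sigma>^^i) h1 \<noteq> (\<sigma>^^j) h2"
proof
  assume eq: "(\<sigma>^^i) h1 = (\<sigma>^^j) h2"
  have bij: "bij \<sigma>" using p by (rule permutes_bij)
  obtain k where k: "j = i + k" using ij le_Suc_ex by blast
  have "(\<sigma>^^i) h1 = (\<sigma>^^i) ((\<sigma>^^k) h2)" using eq k by (simp add: funpow_add)
  moreover have "inj (\<sigma>^^i)" using bij bij_is_inj inj_fn by blast
  ultimately have hk: "h1 = (\<sigma>^^k) h2" by (simp add: inj_eq)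
  show False
  proof (cases k)
    case 0
    then have "h1 = h2" using hk by simp
    then have "r1 \<noteq> r2" using ne by simp
    have s1: "\<forall>i\<le>r1. (\<sigma>^^i) h1 \<in> H'" "(\<sigma>^^Suc r1) h1 \<notin> H'"
      using m1 unfolding maximal_sector_def sector_def by auto
    have s2: "\<forall>i\<le>r2. (\<sigma>^^i) h2 \<in> H'" "(\<sigma>^^Suc r2) h2 \<notin> H'"
      using m2 unfolding maximal_sector_def sector_def by auto
    show False
    proof (cases "r1 < r2")
      case True then show ?thesis using s1(2) s2(1)[rule_format, of "Suc r1"] \<open>h1 = h2\<close> by simp
    next
      case False then have "r2 < r1" using \<open>r1 \<noteq> r2\<close> by simp
      then show ?thesis using s2(2) s1(1)[rule_format, of "Suc r2"] \<open>h1 = h2\<close> by simp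
    qed
  next
    case (Suc k')
    then have "\<sigma> ((\<sigma>^^k') h2) = h1" using hk by simp
    then have "inv \<sigma> h1 = (\<sigma>^^k') h2" using permutes_inverses(2)[OF p] by metis
    moreover have "k' \<le> r2" using Suc k j2 by simp
    ultimately show False using m1 m2 unfolding maximal_sector_def sector_def by auto
  qed
qed

lemma disj:
  assumes p: "\<sigma> permutes H"
    and m1: "maximal_sector H' \<sigma> (h1, r1)" and m2: "maximal_sector H' \<sigma> (h2, r2)"
    and ne: "(h1, r1) \<noteq> (h2, r2)" and i1: "i \<le> r1" and j2: "j \<le> r2"
  shows "(\<sigma>^^i) h1 \<noteq> (\<sigma>^^j) h2"
proof (cases "i \<le> j")
  case True then show ?thesis using disj_aux[OF p m1 m2 ne] i1 j2 by blast
next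
  case False then show ?thesis using disj_aux[OF p m2 m1] ne i1 j2 by (metis nat_le_linear)
qed


definition dmove :: "('a \<Rightarrow> int) \<Rightarrow> 'a \<Rightarrow> 'a \<Rightarrow> 'a \<Rightarrow> int \<Rightarrow> 'a \<Rightarrow> int" where
  "dmove d a b c S = (\<lambda>x. if x = a then -S else if x = b then (if a \<noteq> c then d a + d b else d c + S + d b)
          else if x = c then (if a \<noteq> c then d c + S else -S) else d x)"

lemma composite:
  fixes d :: "'a \<Rightarrow> int"
  assumes bg: "brauer_graph H \<iota> \<sigma> m" and sub: "H' \<subseteq> H" and st: "\<iota> ` H' \<subseteq> H'"
    and m1: "maximal_sector H' \<sigma> (h1, r1)" and m2: "maximal_sector H' \<sigma> (h2, r2)"
    and ne: "(h1, r1) \<noteq> (h2, r2)"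
  defines "e1 \<equiv> (\<sigma>^^Suc r1) h1" and "b1 \<equiv> (\<sigma>^^r1) h1" and "c1 \<equiv> inv \<sigma> h1"
    and "S1 \<equiv> (\<Sum>i\<le>r1. d ((\<sigma> ^^ i) h1))" and "B1 \<equiv> {x. \<exists>i\<le>r1. x = (\<sigma>^^i) h1}"
  defines "e2 \<equiv> (\<sigma>^^Suc r2) h2" and "b2 \<equiv> (\<sigma>^^r2) h2" and "c2 \<equiv> inv \<sigma> h2"
    and "S2 \<equiv> (\<Sum>i\<le>r2. d ((\<sigma> ^^ i) h2))" and "B2 \<equiv> {x. \<exists>i\<le>r2. x = (\<sigma>^^i) h2}"
  shows "kauer_move \<iota> (kauer_move \<iota> (\<sigma>,m,d) (h2,r2)) (h1,r1) =
    (Transposition.transpose h1 e1 \<circ> (Transposition.transpose h2 e2 \<circ> \<sigma> \<circ> Transposition.transpose b2 (\<iota> e2))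
       \<circ> Transposition.transpose b1 (\<iota> e1),
     (\<lambda>x. if x\<in>B1 then m (\<iota> e1) else if x\<in>B2 then m (\<iota> e2) else m x),
     dmove (dmove d (\<iota> e2) b2 c2 S2) (\<iota> e1) b1 (if c1 = \<iota> e2 then b2 else c1) S1)"
proof -
  have p: "\<sigma> permutes H" using bg unfolding brauer_graph_def by auto
  note f1 = sector_facts[OF bg sub st m1, folded e1_def c1_def]
  note f2 = sector_facts[OF bg sub st m2, folded e2_def c2_def]
  define a1 where "a1 = \<iota> e1"
  define a2 where "a2 = \<iota> e2"
  have inj: "inj \<sigma>" using p permutes_inj by blast
  have se1: "\<sigma> b1 = e1" and se2: "\<sigma> b2 = e2" unfolding e1_def b1_def e2_def b2_def by simp_all
  have dj: "\<And>i j. i \<le> r1 \<Longrightarrow> j \<le> r2 \<Longrightarrow> (\<sigma>^^i) h1 \<noteq> (\<sigma>^^j) h2"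
    using disj[OF p m1 m2 ne] by blast
  have k1: "kauer_move \<iota> (\<sigma>,m,d) (h2,r2) = (Transposition.transpose h2 e2 \<circ> \<sigma> \<circ> Transposition.transpose b2 a2,
     (\<lambda>x. if x\<in>B2 then m a2 else m x), dmove d a2 b2 c2 S2)"
    unfolding a2_def dmove_def
    by (rule move_explicit) (auto simp: e2_def b2_def c2_def S2_def B2_def)
  define \<sigma>2 where "\<sigma>2 = Transposition.transpose h2 e2 \<circ> \<sigma> \<circ> Transposition.transpose b2 a2"
  define d2 where "d2 = dmove d a2 b2 c2 S2"
  have B1H: "\<And>i. i \<le> r1 \<Longrightarrow> (\<sigma>^^i) h1 \<in> H'" by (rule f1(1))
  have B2H: "\<And>i. i \<le> r2 \<Longrightarrow> (\<sigma>^^i) h2 \<in> H'" by (rule f2(1))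
  have b2H: "b2 \<in> H'" "h2 \<in> H'" "b1 \<in> H'" "h1 \<in> H'" using B1H[of r1] B2H[of r2] B1H[of 0] B2H[of 0]
    unfolding b1_def b2_def by auto
  have same: "\<And>y. y \<in> H' \<Longrightarrow> y \<noteq> b2 \<Longrightarrow> \<sigma>2 y = \<sigma> y"
  proof -
    fix y assume y: "y \<in> H'" "y \<noteq> b2"
    have "y \<noteq> a2" using y f2 a2_def by auto
    moreover have "\<sigma> y \<noteq> h2"
    proof
      assume "\<sigma> y = h2"
      then have "y = c2" using f2(6) inj by (metis injD)
      then show False using y f2(5) by simp
    qed
    moreover have "\<sigma> y \<noteq> e2" using se2 y inj by (metis injD)
    ultimately show "\<sigma>2 y = \<sigma> y" unfolding \<sigma>2_def using y by simp
  qed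
  have pow: "\<And>i. i \<le> Suc r1 \<Longrightarrow> (\<sigma>2^^i) h1 = (\<sigma>^^i) h1"
  proof -
    fix i show "i \<le> Suc r1 \<Longrightarrow> (\<sigma>2^^i) h1 = (\<sigma>^^i) h1"
    proof (induction i)
      case 0 then show ?case by simp
    next
      case (Suc i)
      then have "i \<le> r1" by simp
      have "(\<sigma>^^i) h1 \<noteq> b2" using dj[OF \<open>i \<le> r1\<close>, of r2] b2_def by simp
      then show ?case using Suc same B1H[OF \<open>i \<le> r1\<close>] by simp
    qed
  qed
  have bij2: "bij \<sigma>2" unfolding \<sigma>2_def by (intro bij_comp bij_transpose permutes_bij[OF p])
  have e2H: "e2 \<notin> H'" "a2 \<notin> H'" "c2 \<notin> H'" "c1 \<notin> H'" using f2 f1 a2_def by auto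
  have h12: "h1 \<noteq> h2" using dj[of 0 0] by simp
  have c1': "inv \<sigma>2 h1 = (if c1 = a2 then b2 else c1)"
  proof (cases "c1 = a2")
    case True
    have "\<sigma>2 b2 = Transposition.transpose h2 e2 (\<sigma> a2)" unfolding \<sigma>2_def by simp
    also have "\<sigma> a2 = h1" using True f1(6) by simp
    also have "Transposition.transpose h2 e2 h1 = h1" using h12 e2H b2H by (intro transpose_apply_other) auto
    finally have "\<sigma>2 b2 = h1" .
    then show ?thesis using True bij2 bij_is_inj inv_f_f by metis
  next
    case False
    have "c1 \<noteq> b2" using e2H b2H by auto
    then have "\<sigma>2 c1 = Transposition.transpose h2 e2 (\<sigma> c1)" unfolding \<sigma>2_def using False by simp
    also have "\<sigma> c1 = h1" using f1(6) by simp
    also have "Transposition.transpose h2 e2 h1 = h1" using h12 e2H b2H by (intro transpose_apply_other) auto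
    finally have "\<sigma>2 c1 = h1" .
    then show ?thesis using False bij2 bij_is_inj inv_f_f by metis
  qed
  have dsame: "\<And>i. i \<le> r1 \<Longrightarrow> d2 ((\<sigma>^^i) h1) = d ((\<sigma>^^i) h1)"
  proof -
    fix i assume i: "i \<le> r1"
    have "(\<sigma>^^i) h1 \<noteq> b2" using dj[OF i, of r2] b2_def by simp
    moreover have "(\<sigma>^^i) h1 \<noteq> a2" "(\<sigma>^^i) h1 \<noteq> c2" using B1H[OF i] e2H by auto
    ultimately show "d2 ((\<sigma>^^i) h1) = d ((\<sigma>^^i) h1)" unfolding d2_def dmove_def by simp
  qed
  have sum: "(\<Sum>i\<le>r1. d2 ((\<sigma>2 ^^ i) h1)) = S1" unfolding S1_def
    using pow dsame by (intro sum.cong) auto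
  have k2: "kauer_move \<iota> (\<sigma>2, (\<lambda>x. if x\<in>B2 then m a2 else m x), d2) (h1,r1) =
     (Transposition.transpose h1 e1 \<circ> \<sigma>2 \<circ> Transposition.transpose b1 (\<iota> e1),
      (\<lambda>x. if x\<in>B1 then (\<lambda>x. if x\<in>B2 then m a2 else m x) (\<iota> e1) else (\<lambda>x. if x\<in>B2 then m a2 else m x) x),
      dmove d2 (\<iota> e1) b1 (if c1 = a2 then b2 else c1) S1)"
    unfolding dmove_def
    proof (rule move_explicit)
    show "(\<sigma>2 ^^ Suc r1) h1 = e1" unfolding e1_def by (rule pow) simp
    show "(\<sigma>2 ^^ r1) h1 = b1" unfolding b1_def by (rule pow) simp
    show "inv \<sigma>2 h1 = (if c1 = a2 then b2 else c1)" by (rule c1')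
    show "(\<Sum>i\<le>r1. d2 ((\<sigma>2 ^^ i) h1)) = S1" by (rule sum)
    fix x show "(\<exists>i\<le>r1. x = (\<sigma>2 ^^ i) h1) = (x \<in> B1)" unfolding B1_def using pow by auto
  qed
  have a1B2: "\<iota> e1 \<notin> B2" using f1(4) B2H unfolding B2_def e1_def by auto
  have mm: "(\<lambda>x. if x\<in>B1 then (\<lambda>x. if x\<in>B2 then m a2 else m x) (\<iota> e1) else (\<lambda>x. if x\<in>B2 then m a2 else m x) x)
     = (\<lambda>x. if x\<in>B1 then m (\<iota> e1) else if x\<in>B2 then m (\<iota> e2) else m x)"
    using a1B2 a2_def by (simp add: fun_eq_iff)
  show ?thesis unfolding k1[folded \<sigma>2_def d2_def] k2 mm
    by (simp add: \<sigma>2_def d2_def a2_def)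
qed


lemma transpose_comm:
  assumes "a \<noteq> c" "a \<noteq> d" "b \<noteq> c" "b \<noteq> d"
  shows "Transposition.transpose a b \<circ> Transposition.transpose c d = Transposition.transpose c d \<circ> Transposition.transpose a b"
  using assms by (auto simp: fun_eq_iff Transposition.transpose_def)

theorem proposition2p16:
  fixes H H' :: "'a set" and \<iota> \<sigma> :: "'a \<Rightarrow> 'a" and m :: "'a \<Rightarrow> nat"
    and d :: "'a \<Rightarrow> int" and h1 h2 :: 'a and r1 r2 :: nat
  assumes "brauer_graph H \<iota> \<sigma> m"
    and "H' \<subseteq> H" and "\<iota> ` H' \<subseteq> H'"
    and "maximal_sector H' \<sigma> (h1, r1)" and "maximal_sector H' \<sigma> (h2, r2)"
    and "(h1, r1) \<noteq> (h2, r2)"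
    and "admissible_grading H \<sigma> m d"
  shows "let G12 = kauer_move \<iota> (kauer_move \<iota> (\<sigma>, m, d) (h2, r2)) (h1, r1);
             G21 = kauer_move \<iota> (kauer_move \<iota> (\<sigma>, m, d) (h1, r1)) (h2, r2)
         in fst G12 = fst G21 \<and> fst (snd G12) = fst (snd G21) \<and>
            (\<forall>x\<in>H. [snd (snd G12) x = snd (snd G21) x] (mod int (mbar H m)))"
proof -
  note bg = assms(1) and sub = assms(2) and st = assms(3) and m1 = assms(4) and m2 = assms(5)
    and ne = assms(6)
  have ne': "(h2, r2) \<noteq> (h1, r1)" using ne by auto
  note C12 = composite[OF bg sub st m1 m2 ne, of d]
  note C21 = composite[OF bg sub st m2 m1 ne', of d]
  define e1 where "e1 = (\<sigma>^^Suc r1) h1"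
  define b1 where "b1 = (\<sigma>^^r1) h1"
  define c1 where "c1 = inv \<sigma> h1"
  define S1 where "S1 = (\<Sum>i\<le>r1. d ((\<sigma> ^^ i) h1))"
  define B1 where "B1 = {x. \<exists>i\<le>r1. x = (\<sigma>^^i) h1}"
  define e2 where "e2 = (\<sigma>^^Suc r2) h2"
  define b2 where "b2 = (\<sigma>^^r2) h2"
  define c2 where "c2 = inv \<sigma> h2"
  define S2 where "S2 = (\<Sum>i\<le>r2. d ((\<sigma> ^^ i) h2))"
  define B2 where "B2 = {x. \<exists>i\<le>r2. x = (\<sigma>^^i) h2}"
  define a1 where "a1 = \<iota> e1"
  define a2 where "a2 = \<iota> e2"
  note C12' = C12[folded e1_def b1_def c1_def S1_def B1_def e2_def b2_def c2_def S2_def B2_def, folded a1_def a2_def]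
  note C21' = C21[folded e1_def b1_def c1_def S1_def B1_def e2_def b2_def c2_def S2_def B2_def, folded a1_def a2_def]
  have p: "\<sigma> permutes H" and pi: "\<iota> permutes H" using bg unfolding brauer_graph_def by auto
  note f1 = sector_facts[OF bg sub st m1, folded e1_def c1_def, folded a1_def]
  note f2 = sector_facts[OF bg sub st m2, folded e2_def c2_def, folded a2_def]
  have dj: "\<And>i j. i \<le> r1 \<Longrightarrow> j \<le> r2 \<Longrightarrow> (\<sigma>^^i) h1 \<noteq> (\<sigma>^^j) h2"
    using disj[OF p m1 m2 ne] by blast
  have inj: "inj \<sigma>" using p permutes_inj by blast
  have inji: "inj \<iota>" using pi permutes_inj by blast
  have se1: "\<sigma> b1 = e1" and se2: "\<sigma> b2 = e2" unfolding e1_def b1_def e2_def b2_def by simp_all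
  have bH: "b1 \<in> H'" "b2 \<in> H'" "h1 \<in> H'" "h2 \<in> H'" using f1(1)[of r1] f2(1)[of r2] f1(1)[of 0] f2(1)[of 0]
    unfolding b1_def b2_def by auto
  have h12: "h1 \<noteq> h2" using dj[of 0 0] by simp
  have b12: "b1 \<noteq> b2" using dj[of r1 r2] b1_def b2_def by simp
  have e12: "e1 \<noteq> e2" using b12 se1 se2 inj by (metis injD)
  have a12: "a1 \<noteq> a2" using e12 inji a1_def a2_def by (metis injD)
  have c12: "c1 \<noteq> c2" using h12 f1(6) f2(6) by metis
  have nH: "a1 \<notin> H'" "a2 \<notin> H'" "c1 \<notin> H'" "c2 \<notin> H'" "e1 \<notin> H'" "e2 \<notin> H'" using f1 f2 by auto
  have B12: "B1 \<inter> B2 = {}" unfolding B1_def B2_def using dj by auto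
  have P: "Transposition.transpose h1 e1 \<circ> (Transposition.transpose h2 e2 \<circ> \<sigma> \<circ> Transposition.transpose b2 a2) \<circ> Transposition.transpose b1 a1
     = Transposition.transpose h2 e2 \<circ> (Transposition.transpose h1 e1 \<circ> \<sigma> \<circ> Transposition.transpose b1 a1) \<circ> Transposition.transpose b2 a2"
  proof -
    have t1: "Transposition.transpose h1 e1 \<circ> Transposition.transpose h2 e2 = Transposition.transpose h2 e2 \<circ> Transposition.transpose h1 e1"
      using h12 e12 bH nH by (intro transpose_comm) auto
    have t2: "Transposition.transpose b2 a2 \<circ> Transposition.transpose b1 a1 = Transposition.transpose b1 a1 \<circ> Transposition.transpose b2 a2"
      using b12 a12 bH nH by (intro transpose_comm) auto
    let ?T1 = "Transposition.transpose h1 e1" and ?T2 = "Transposition.transpose h2 e2"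
      and ?U1 = "Transposition.transpose b1 a1" and ?U2 = "Transposition.transpose b2 a2"
    have "?T1 \<circ> (?T2 \<circ> \<sigma> \<circ> ?U2) \<circ> ?U1 = (?T1 \<circ> ?T2) \<circ> \<sigma> \<circ> (?U2 \<circ> ?U1)" by (simp add: comp_assoc)
    also have "\<dots> = (?T2 \<circ> ?T1) \<circ> \<sigma> \<circ> (?U1 \<circ> ?U2)" by (simp only: t1 t2)
    also have "\<dots> = ?T2 \<circ> (?T1 \<circ> \<sigma> \<circ> ?U1) \<circ> ?U2" by (simp add: comp_assoc)
    finally show ?thesis .
  qed
  have M: "(\<lambda>x. if x\<in>B1 then m a1 else if x\<in>B2 then m a2 else m x) = (\<lambda>x. if x\<in>B2 then m a2 else if x\<in>B1 then m a1 else m x)"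
    using B12 by (auto simp: fun_eq_iff)
  have D: "dmove (dmove d a2 b2 c2 S2) a1 b1 (if c1 = a2 then b2 else c1) S1 = dmove (dmove d a1 b1 c1 S1) a2 b2 (if c2 = a1 then b1 else c2) S2"
    using a12 b12 c12 bH nH unfolding dmove_def fun_eq_iff by (auto split: if_splits)
  show ?thesis unfolding C12' C21' Let_def using P M D by simp
qed

end
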